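(* Let $n\ge 2$, let $d$ be prime, and let $f:\mathbb{Z}_{c_1}\times\cdots\times\mathbb{Z}_{c_n}\to\mathbb{Z}_d$ be a function that is not bipartite linear. Then the only non-signalling distribution $p(\mathbf{m}|\mathbf{s})$ (with $m_j\in\mathbb{Z}_d$) whose correlator is the deterministic correlator $p(k|\mathbf{s})=\delta^k_{f(\mathbf{s})}$ is $$p(\mathbf{m}|\mathbf{s})=\begin{cases} d^{1-n} & \text{if } [\sum_{j=1}^n m_j]_d=f(\mathbf{s}),\\ 0&\text{otherwise.}\end{cases}$$
   Context: Correlator: $p(k|\mathbf{s})=\sum_{\mathbf{m}:[\sum_j m_j]_d=k}p(\mathbf{m}|\mathbf{s})$, with $[\cdot]_d$ reduction mod $d$. Non-signalling: for every subset $\mathcal{J}\subseteq\{1,\dots,n\}$ and inputs $\mathbf{s},\mathbf{s}'$ that agree on all coordinates outside $\mathcal{J}$, $\sum_{(m_j)_{j\in\mathcal{J}}}p(\mathbf{m}|\mathbf{s})=\sum_{(m_j)_{j\in\mathcal{J}}}p(\mathbf{m}|\mathbf{s}')$. A function $f$ is bipartite linear if there exist a nonempty proper subset $\mathcal{J}\subset\{1,\dots,n\}$ with complement $\mathcal{J}^c$ and functions $f^1$ of $(s_j)_{j\in\mathcal{J}}$ and $f^2$ of $(s_j)_{j\in\mathcal{J}^c}$, both valued in $\mathbb{Z}_d$, with $f(\mathbf{s})=[f^1((s_j)_{j\in\mathcal{J}})+f^2((s_j)_{j\in\mathcal{J}^c})]_d$. *)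

theory Defs
  imports Complex_Main "HOL-Computational_Algebra.Primes"
begin

text \<open>Parties are indexed by 0..n-1. An input string s lies in
  Z_{c_0} x ... x Z_{c_{n-1}}, encoded as s :: nat => nat with s j < c j for j < n
  and s j = 0 for j >= n (extensional).\<close>

definition inputs :: "(nat \<Rightarrow> nat) \<Rightarrow> nat \<Rightarrow> (nat \<Rightarrow> nat) set" where
  "inputs c n = {s. (\<forall>j<n. s j < c j) \<and> (\<forall>j\<ge>n. s j = 0)}"

definition outputs :: "nat \<Rightarrow> nat \<Rightarrow> (nat \<Rightarrow> nat) set" where
  "outputs d n = {m. (\<forall>j<n. m j < d) \<and> (\<forall>j\<ge>n. m j = 0)}"

definition is_cond_distr ::
  "nat \<Rightarrow> (nat \<Rightarrow> nat) \<Rightarrow> nat \<Rightarrow> ((nat \<Rightarrow> nat) \<Rightarrow> (nat \<Rightarrow> nat) \<Rightarrow> real) \<Rightarrow> bool" where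
  "is_cond_distr n c d p \<longleftrightarrow>
     (\<forall>s\<in>inputs c n. (\<forall>m\<in>outputs d n. p m s \<ge> 0) \<and> (\<Sum>m\<in>outputs d n. p m s) = 1)"

definition correlator ::
  "nat \<Rightarrow> nat \<Rightarrow> ((nat \<Rightarrow> nat) \<Rightarrow> (nat \<Rightarrow> nat) \<Rightarrow> real) \<Rightarrow> (nat \<Rightarrow> nat) \<Rightarrow> nat \<Rightarrow> real" where
  "correlator n d p s k = (\<Sum>m\<in>{m\<in>outputs d n. (\<Sum>j<n. m j) mod d = k}. p m s)"

text \<open>Non-signalling: for every J subset of the parties and inputs s, s' agreeing
  outside J, the marginal on the complement of J (i.e. summing out the outputs in J,
  for each fixed value m0 of the outputs outside J) coincides.\<close>

definition non_signalling ::
  "nat \<Rightarrow> (nat \<Rightarrow> nat) \<Rightarrow> nat \<Rightarrow> ((nat \<Rightarrow> nat) \<Rightarrow> (nat \<Rightarrow> nat) \<Rightarrow> real) \<Rightarrow> bool" where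
  "non_signalling n c d p \<longleftrightarrow>
     (\<forall>J. J \<subseteq> {..<n} \<longrightarrow>
       (\<forall>s\<in>inputs c n. \<forall>s'\<in>inputs c n. (\<forall>j\<in>{..<n} - J. s j = s' j) \<longrightarrow>
         (\<forall>m0\<in>outputs d n.
            (\<Sum>m\<in>{m\<in>outputs d n. \<forall>j\<in>{..<n} - J. m j = m0 j}. p m s) =
            (\<Sum>m\<in>{m\<in>outputs d n. \<forall>j\<in>{..<n} - J. m j = m0 j}. p m s'))))"

definition bipartite_linear ::
  "nat \<Rightarrow> (nat \<Rightarrow> nat) \<Rightarrow> nat \<Rightarrow> ((nat \<Rightarrow> nat) \<Rightarrow> nat) \<Rightarrow> bool" where
  "bipartite_linear n c d f \<longleftrightarrow>
     (\<exists>J f1 f2. J \<noteq> {} \<and> J \<subset> {..<n} \<and>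
        (\<forall>s\<in>inputs c n. f1 s < d \<and> f2 s < d) \<and>
        (\<forall>s\<in>inputs c n. \<forall>s'\<in>inputs c n. (\<forall>j\<in>J. s j = s' j) \<longrightarrow> f1 s = f1 s') \<and>
        (\<forall>s\<in>inputs c n. \<forall>s'\<in>inputs c n. (\<forall>j\<in>{..<n} - J. s j = s' j) \<longrightarrow> f2 s = f2 s') \<and>
        (\<forall>s\<in>inputs c n. f s = (f1 s + f2 s) mod d))"

end

theory Submission
  imports Defs "HOL-Number_Theory.Cong"
begin


lemma outputs_Suc: "outputs d (Suc n) = (\<lambda>(m,t). m(n:=t)) ` (outputs d n \<times> {..<d})"
proof (rule set_eqI, rule iffI)
  fix m assume m: "m \<in> outputs d (Suc n)"
  have "m(n:=0) \<in> outputs d n" using m by (auto simp: outputs_def)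
  moreover have "m n < d" using m by (auto simp: outputs_def)
  ultimately show "m \<in> (\<lambda>(m,t). m(n:=t)) ` (outputs d n \<times> {..<d})"
    by (intro image_eqI[of _ _ "(m(n:=0), m n)"]) auto
next
  fix m assume "m \<in> (\<lambda>(m,t). m(n:=t)) ` (outputs d n \<times> {..<d})"
  then show "m \<in> outputs d (Suc n)" by (auto simp: outputs_def less_Suc_eq)
qed

lemma outputs_0: "outputs d 0 = {\<lambda>_. 0}"
  by (auto simp: outputs_def)

lemma finite_outputs: "finite (outputs d n)"
  by (induction n) (auto simp: outputs_Suc outputs_0)

lemma sum_split_coord:
  fixes g :: "(nat \<Rightarrow> nat) \<Rightarrow> 'a::comm_monoid_add"
  assumes "finite F" "0 < d" "\<forall>m\<in>F. m i < d" "\<forall>m\<in>F. \<forall>t<d. m(i:=t) \<in> F"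
  shows "sum g F = (\<Sum>m'\<in>{m\<in>F. m i = 0}. \<Sum>t<d. g (m'(i:=t)))"
proof -
  let ?F0 = "{m\<in>F. m i = 0}"
  let ?h = "\<lambda>(m::nat\<Rightarrow>nat,t::nat). m(i:=t)"
  have inj: "inj_on ?h (?F0 \<times> {..<d})"
  proof (rule inj_onI, clarify)
    fix m1 t1 m2 t2 assume a: "m1 \<in> F" "m1 i = 0" "t1 < d" "m2 \<in> F" "m2 i = 0" "t2 < d"
      and e: "m1(i:=t1) = m2(i:=t2)"
    have "t1 = t2" using fun_cong[OF e, of i] by simp
    moreover have "m1 = m2"
    proof
      fix j show "m1 j = m2 j" using fun_cong[OF e, of j] a by (cases "j = i") auto
    qed
    ultimately show "m1 = m2 \<and> t1 = t2" by simp
  qed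
  have img: "?h ` (?F0 \<times> {..<d}) = F"
  proof (rule set_eqI, rule iffI)
    fix m assume "m \<in> ?h ` (?F0 \<times> {..<d})"
    then show "m \<in> F" using assms(4) by auto
  next
    fix m assume m: "m \<in> F"
    have "m(i:=0) \<in> F" using assms(2,4) m by auto
    moreover have "m i < d" using assms(3) m by auto
    ultimately show "m \<in> ?h ` (?F0 \<times> {..<d})"
      by (intro image_eqI[of _ _ "(m(i:=0), m i)"]) auto
  qed
  have "sum g F = sum (g \<circ> ?h) (?F0 \<times> {..<d})"
    using sum.reindex[OF inj, of g] img by simp
  also have "\<dots> = (\<Sum>m'\<in>?F0. \<Sum>t<d. g (m'(i:=t)))"
    by (simp add: sum.cartesian_product case_prod_unfold)
  finally show ?thesis .
qed

lemma outputs_split: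
  assumes "i < n" "0 < d"
  shows "sum g (outputs d n) = (\<Sum>m'\<in>{m\<in>outputs d n. m i = 0}. \<Sum>t<d. g (m'(i:=t)))"
  using assms finite_outputs[of d n] by (intro sum_split_coord) (auto simp: outputs_def)

lemma card_outputs: "0 < d \<Longrightarrow> card (outputs d n) = d ^ n"
proof (induction n)
  case 0 then show ?case by (simp add: outputs_0)
next
  case (Suc n)
  have e: "{m\<in>outputs d (Suc n). m n = 0} = outputs d n"
  proof (rule set_eqI, rule iffI)
    fix m assume m: "m \<in> {m\<in>outputs d (Suc n). m n = 0}"
    show "m \<in> outputs d n" unfolding outputs_def
    proof (intro CollectI conjI allI impI)
      fix j assume "j < n" then show "m j < d" using m by (auto simp: outputs_def)
    next
      fix j assume j: "n \<le> j"
      show "m j = 0"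
      proof (cases "j = n")
        case True then show ?thesis using m by simp
      next
        case False then have "Suc n \<le> j" using j by simp
        then show ?thesis using m by (auto simp: outputs_def)
      qed
    qed
  next
    fix m assume "m \<in> outputs d n"
    then show "m \<in> {m\<in>outputs d (Suc n). m n = 0}" using Suc.prems by (auto simp: outputs_def less_Suc_eq)
  qed
  have "card (outputs d (Suc n)) = (\<Sum>m\<in>outputs d (Suc n). 1::nat)" by simp
  also have "\<dots> = (\<Sum>m'\<in>outputs d n. \<Sum>t<d. 1::nat)"
    using outputs_split[of n "Suc n" d "\<lambda>_. 1::nat"] Suc.prems e by simp
  also have "\<dots> = d ^ Suc n" using Suc by simp
  finally show ?case .
qed

lemma card_outputs0: assumes "i < n" "0 < d"
  shows "card {m\<in>outputs d n. m i = 0} = d ^ (n - 1)"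
proof -
  have "d ^ n = (\<Sum>m\<in>outputs d n. 1::nat)" using card_outputs[OF assms(2)] by simp
  also have "\<dots> = card {m\<in>outputs d n. m i = 0} * d"
    using outputs_split[OF assms, of "\<lambda>_. 1::nat"] by simp
  finally have "d ^ n = card {m\<in>outputs d n. m i = 0} * d" .
  moreover have "d ^ n = d ^ (n - 1) * d" using assms(1)
    by (metis Suc_pred' gr_implies_not0 mult.commute not_gr_zero power_Suc)
  ultimately show ?thesis using assms(2) by simp
qed

lemma unique_sol:
  fixes d e C :: nat
  assumes "prime d" "\<not> d dvd e"
  shows "card {t. t < d \<and> [C + t * e = 0] (mod d)} = 1"
proof -
  have cop: "coprime e d" using assms
    using prime_imp_coprime[of d e] coprime_commute by blast
  obtain x where x: "[e * x = 1] (mod d)" using cong_solve_coprime_nat[OF cop] by auto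
  have d0: "0 < d" using assms prime_gt_0_nat by blast
  define t0 where "t0 = (x * (d - C mod d)) mod d"
  have t0d: "t0 < d" using d0 by (simp add: t0_def)
  have "[C + t0 * e = C + (x * (d - C mod d)) * e] (mod d)"
  proof -
    have "[t0 = x * (d - C mod d)] (mod d)" by (simp add: t0_def cong_def)
    then have "[t0 * e = (x * (d - C mod d)) * e] (mod d)" by (rule cong_mult) (rule cong_refl)
    then show ?thesis by (rule cong_add[OF cong_refl])
  qed
  also have "(x * (d - C mod d)) * e = (e * x) * (d - C mod d)" by simp
  also have "[C + (e * x) * (d - C mod d) = C + 1 * (d - C mod d)] (mod d)"
    by (rule cong_add[OF cong_refl], rule cong_mult[OF x cong_refl])
  also have "[C + 1 * (d - C mod d) = C mod d + (d - C mod d)] (mod d)"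
    by (simp add: cong_def mod_add_left_eq)
  also have "C mod d + (d - C mod d) = d" using d0 by simp
  also have "[d = 0] (mod d)" by (simp add: cong_def)
  finally have t0s: "[C + t0 * e = 0] (mod d)" .
  have uniq: "t = t0" if "t < d" "[C + t * e = 0] (mod d)" for t
  proof -
    have "[C + t * e = C + t0 * e] (mod d)" using cong_trans[OF that(2) cong_sym[OF t0s]] .
    then have "[t * e = t0 * e] (mod d)" by (simp add: cong_add_lcancel_nat)
    then have "[t = t0] (mod d)" using cop cong_mult_rcancel_nat by blast
    then show ?thesis using that(1) t0d by (simp add: cong_def)
  qed
  have "{t. t < d \<and> [C + t * e = 0] (mod d)} = {t0}"
  proof (rule set_eqI)
    fix t show "t \<in> {t. t < d \<and> [C + t * e = 0] (mod d)} \<longleftrightarrow> t \<in> {t0}"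
      using uniq[of t] t0d t0s by blast
  qed
  then show ?thesis by simp
qed

lemma cong_iff_zero:
  fixes X Y d :: nat assumes "0 < d"
  shows "X mod d = Y mod d \<longleftrightarrow> [X + (d - 1) * Y = 0] (mod d)"
proof -
  have "X mod d = Y mod d \<longleftrightarrow> [X + (d - 1) * Y = Y + (d - 1) * Y] (mod d)"
    unfolding cong_add_rcancel_nat by (simp add: cong_def)
  also have "Y + (d - 1) * Y = d * Y" using assms
    by (metis Suc_pred' mult_Suc)
  also have "[X + (d - 1) * Y = d * Y] (mod d) \<longleftrightarrow> [X + (d - 1) * Y = 0] (mod d)"
    by (simp add: cong_def)
  finally show ?thesis .
qed

lemma count_lin:
  fixes d a b A B :: nat
  assumes "prime d" "a < d" "b < d" "a \<noteq> b"
  shows "card {t. t < d \<and> (A + t * a) mod d = (B + t * b) mod d} = 1"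
proof -
  have d0: "0 < d" using assms prime_gt_0_nat by blast
  let ?e = "a + (d - 1) * b"
  have db: "(d - 1) * b + b = d * b" using d0 by (cases d) auto
  have nd: "\<not> d dvd ?e"
  proof
    assume "d dvd ?e"
    then have "[?e = 0] (mod d)" by (simp add: cong_0_iff)
    then have c1: "[?e + b = 0 + b] (mod d)" by (rule cong_add) simp
    have eq: "?e + b = a + d * b" using db by (simp only: add.assoc)
    from c1 have "[a + d * b = 0 + b] (mod d)" by (simp only: eq)
    then have "[a + d * b = b] (mod d)" by simp
    then have "[a = b] (mod d)" by (simp add: cong_def)
    then show False using assms by (simp add: cong_def)
  qed
  have pt: "(A + t * a) mod d = (B + t * b) mod d \<longleftrightarrow> [(A + (d - 1) * B) + t * ?e = 0] (mod d)" for t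
  proof -
    have "(A + t * a) + (d - 1) * (B + t * b) = (A + (d - 1) * B) + t * ?e"
      by (simp add: algebra_simps)
    then show ?thesis by (simp only: cong_iff_zero[OF d0])
  qed
  have "{t. t < d \<and> (A + t * a) mod d = (B + t * b) mod d}
      = {t. t < d \<and> [(A + (d - 1) * B) + t * ?e = 0] (mod d)}"
    using pt by blast
  then show ?thesis using unique_sol[OF assms(1) nd] by simp
qed




definition dot :: "nat \<Rightarrow> (nat\<Rightarrow>nat) \<Rightarrow> (nat\<Rightarrow>nat) \<Rightarrow> nat" where
  "dot n K m = (\<Sum>j<n. K j * m j)"

definition Dk :: "nat \<Rightarrow> nat \<Rightarrow> ((nat\<Rightarrow>nat)\<Rightarrow>(nat\<Rightarrow>nat)\<Rightarrow>real) \<Rightarrow> (nat\<Rightarrow>nat) \<Rightarrow> (nat\<Rightarrow>nat) \<Rightarrow> nat \<Rightarrow> real" where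
  "Dk n d p K s v = (\<Sum>m\<in>outputs d n. if dot n K m mod d = v mod d then p m s else 0)"

definition sh :: "nat \<Rightarrow> (nat\<Rightarrow>nat) \<Rightarrow> nat \<Rightarrow> nat \<Rightarrow> nat" where
  "sh d K a = (\<lambda>j. (K j + (d - a)) mod d)"

definition zo :: "nat set \<Rightarrow> (nat\<Rightarrow>nat) \<Rightarrow> nat \<Rightarrow> nat" where
  "zo A u = (\<lambda>j. if j \<in> A then 0 else u j)"

definition constf :: "(nat \<Rightarrow> real) \<Rightarrow> bool" where "constf P \<longleftrightarrow> (\<forall>v. P v = P 0)"

lemma dm1: "0 < d \<Longrightarrow> (d - 1) * e + e = (d::nat) * e" by (cases d) auto

lemma Dk_mod: "Dk n d p K s (v mod d) = Dk n d p K s v" by (simp add: Dk_def)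

lemma zo_zo: "zo B (zo A u) = zo (A \<union> B) u" by (auto simp: zo_def)
lemma zo_empty[simp]: "zo {} u = u" by (simp add: zo_def)
lemma zo_inputs: "\<forall>j<n. c j > 0 \<Longrightarrow> u \<in> inputs c n \<Longrightarrow> zo A u \<in> inputs c n"
  by (auto simp: zo_def inputs_def)

lemma sum_if_const:
  assumes "finite F"
  shows "(\<Sum>m\<in>F. if P m then (a::real) else 0) = real (card {m\<in>F. P m}) * a"
proof -
  have "(\<Sum>m\<in>F. if P m then a else 0) = (\<Sum>m\<in>{m\<in>F. P m}. a)"
    using sum.inter_filter[OF assms, of "\<lambda>_. a" P] by simp
  then show ?thesis by simp
qed

lemma periodic_const:
  fixes P :: "nat \<Rightarrow> real" and d \<tau> :: nat
  assumes per: "\<forall>v. P (v mod d) = P v" and tau: "\<forall>z. P (z + \<tau>) = P z"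
    and pr: "prime d" and nd: "\<not> d dvd \<tau>"
  shows "constf P"
proof -
  have d0: "0 < d" using pr prime_gt_0_nat by blast
  have it: "P (z + j*\<tau>) = P z" for z j
  proof (induction j arbitrary: z)
    case 0 then show ?case by simp
  next
    case (Suc j)
    have "z + Suc j * \<tau> = (z + j*\<tau>) + \<tau>" by simp
    then show ?case using tau Suc by metis
  qed
  have cop: "coprime \<tau> d" using prime_imp_coprime[of d \<tau>] pr nd coprime_commute by blast
  obtain x where x: "[\<tau> * x = 1] (mod d)" using cong_solve_coprime_nat[OF cop] by auto
  show ?thesis unfolding constf_def
  proof
    fix v
    let ?j = "x * (d - v mod d)"
    have "v + ?j*\<tau> = v + (\<tau>*x) * (d - v mod d)" by (simp add: algebra_simps)
    also have "[\<dots> = v + 1 * (d - v mod d)] (mod d)" by (intro cong_add cong_mult x) auto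
    also have "[v + 1*(d - v mod d) = v mod d + (d - v mod d)] (mod d)"
      by (simp add: cong_def mod_add_left_eq)
    also have "v mod d + (d - v mod d) = d" using d0 by simp
    also have "[d = 0] (mod d)" by (simp add: cong_def)
    finally have "(v + ?j*\<tau>) mod d = 0" by (simp add: cong_def)
    then show "P v = P 0" using it[of v ?j] per[rule_format, of "v + ?j*\<tau>"] by simp
  qed
qed

lemma const_shift:
  fixes P :: "nat \<Rightarrow> real"
  assumes per: "\<forall>v. P (v mod d) = P v" and d0: "0 < d"
  shows "constf (\<lambda>v. P (v + e)) \<longleftrightarrow> constf P"
proof
  assume "constf P" then show "constf (\<lambda>v. P (v + e))" by (simp add: constf_def) (metis)
next
  assume Q: "constf (\<lambda>v. P (v + e))"
  have "P v = P e" for v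
  proof -
    have "P (v + d*e) = P v" using per[rule_format, of "v + d*e"] per[rule_format, of v] by simp
    then have "P v = P (v + d*e)" by simp
    also have "v + d*e = (v + (d-1)*e) + e" using dm1[OF d0, of e] by simp
    also have "P \<dots> = P (0 + e)" using Q unfolding constf_def by metis
    finally show ?thesis by simp
  qed
  then show "constf P" unfolding constf_def by metis
qed

lemma small_dvd:
  fixes x d :: nat
  assumes "0 < x" "x < 2*d" "d dvd x" shows "x = d"
proof -
  obtain q where q: "x = d * q" using assms(3) by (auto elim!: dvdE)
  have "q \<noteq> 0" using assms(1) q by auto
  moreover have "q < 2" using assms(2) q
    by (metis mult.commute nat_mult_less_cancel1 not_less_zero zero_less_iff_neq_zero mult_0_right)
  ultimately have "q = 1" by linarith
  then show ?thesis using q by simp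
qed


lemma Dk_rep:
  fixes p :: "(nat\<Rightarrow>nat)\<Rightarrow>(nat\<Rightarrow>nat)\<Rightarrow>real"
  assumes K0: "\<forall>j\<in>J. K j = 0"
  shows "Dk n d p K t v = (\<Sum>y\<in>zo J ` outputs d n. if dot n K y mod d = v mod d
                  then (\<Sum>m\<in>{x\<in>outputs d n. zo J x = y}. p m t) else 0)"
proof -
  have dotr: "dot n K (zo J m) = dot n K m" for m
    unfolding dot_def by (rule sum.cong) (auto simp: zo_def K0)
  have grp: "(\<Sum>y\<in>zo J ` outputs d n. \<Sum>m\<in>{x\<in>outputs d n. zo J x = y}. H m) = (\<Sum>m\<in>outputs d n. H m)" for H :: "_ \<Rightarrow> real"
    by (rule sum.group[OF finite_outputs finite_imageI[OF finite_outputs] order_refl])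
  have "Dk n d p K t v = (\<Sum>y\<in>zo J ` outputs d n. \<Sum>m\<in>{x\<in>outputs d n. zo J x = y}.
                     if dot n K m mod d = v mod d then p m t else 0)"
    unfolding Dk_def by (rule grp[symmetric])
  also have "\<dots> = (\<Sum>y\<in>zo J ` outputs d n. if dot n K y mod d = v mod d
                  then (\<Sum>m\<in>{x\<in>outputs d n. zo J x = y}. p m t) else 0)"
  proof (rule sum.cong[OF refl])
    fix y assume "y \<in> zo J ` outputs d n"
    have "(\<Sum>m\<in>{x\<in>outputs d n. zo J x = y}. if dot n K m mod d = v mod d then p m t else 0)
        = (\<Sum>m\<in>{x\<in>outputs d n. zo J x = y}. if dot n K y mod d = v mod d then p m t else 0)"
    proof (rule sum.cong[OF refl])
      fix m assume "m \<in> {x\<in>outputs d n. zo J x = y}"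
      then have "dot n K m = dot n K y" using dotr[of m] by simp
      then show "(if dot n K m mod d = v mod d then p m t else 0) = (if dot n K y mod d = v mod d then p m t else 0)" by simp
    qed
    then show "(\<Sum>m\<in>{x\<in>outputs d n. zo J x = y}. if dot n K m mod d = v mod d then p m t else 0)
        = (if dot n K y mod d = v mod d then (\<Sum>m\<in>{x\<in>outputs d n. zo J x = y}. p m t) else 0)"
      by simp
  qed
  finally show ?thesis .
qed

lemma card_as_sum:
  assumes "finite A"
  shows "card {x\<in>A. P x} = (\<Sum>x\<in>A. if P x then 1 else 0::nat)"
  using sum.inter_filter[OF assms, of "\<lambda>_. 1::nat" P] by simp

lemma dot_upd:
  fixes k' m :: "nat \<Rightarrow> nat" and t :: nat
  assumes "k' i = 0" "i < n"
  shows "dot n (k'(i:=t)) m = dot n k' m + t * m i"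
proof -
  have "dot n (k'(i:=t)) m = (\<Sum>j<n. k' j * m j + (if j = i then t * m i else 0))"
    unfolding dot_def by (rule sum.cong) (use assms in auto)
  also have "\<dots> = dot n k' m + t * m i"
    using assms by (simp add: sum.distrib dot_def)
  finally show ?thesis .
qed

lemma sum_upd:
  fixes m' :: "nat \<Rightarrow> nat" and t :: nat
  assumes "m' i = 0" "i < n"
  shows "(\<Sum>j<n. (m'(i:=t)) j) = (\<Sum>j<n. m' j) + t"
proof -
  have "(\<Sum>j<n. (m'(i:=t)) j) = (\<Sum>j<n. m' j + (if j = i then t else 0))"
    by (rule sum.cong) (use assms in auto)
  also have "\<dots> = (\<Sum>j<n. m' j) + (\<Sum>j<n. if j = i then t else 0)" by (simp add: sum.distrib)
  also have "(\<Sum>j<n. if j = i then t else 0) = t"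
    using assms by simp
  finally show ?thesis .
qed

lemma count_neq:
  fixes d n :: nat
  assumes pr: "prime d" and m: "m \<in> outputs d n" and x: "x \<in> outputs d n" and ne: "m \<noteq> x"
  shows "card {k\<in>outputs d n. dot n k m mod d = dot n k x mod d} = d ^ (n - 1)"
proof -
  have d0: "0 < d" using pr prime_gt_0_nat by blast
  obtain i where i: "i < n" "m i \<noteq> x i"
  proof -
    have "\<exists>i<n. m i \<noteq> x i"
    proof (rule ccontr)
      assume "\<not> (\<exists>i<n. m i \<noteq> x i)"
      then have "m = x" using m x by (auto simp: outputs_def fun_eq_iff) (metis not_less)
      then show False using ne by simp
    qed
    then show ?thesis using that by blast
  qed
  have mi: "m i < d" and xi: "x i < d" using m x i by (auto simp: outputs_def)
  let ?P = "\<lambda>k. dot n k m mod d = dot n k x mod d"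
  have "card {k\<in>outputs d n. ?P k} = (\<Sum>k\<in>outputs d n. if ?P k then 1 else 0::nat)"
    by (rule card_as_sum[OF finite_outputs])
  also have "\<dots> = (\<Sum>k'\<in>{k\<in>outputs d n. k i = 0}. \<Sum>t<d. if ?P (k'(i:=t)) then 1 else 0::nat)"
    by (rule outputs_split[OF i(1) d0])
  also have "\<dots> = (\<Sum>k'\<in>{k\<in>outputs d n. k i = 0}. 1::nat)"
  proof (rule sum.cong[OF refl])
    fix k' assume k': "k' \<in> {k\<in>outputs d n. k i = 0}"
    have "(\<Sum>t<d. if ?P (k'(i:=t)) then 1 else 0::nat) = card {t\<in>{..<d}. ?P (k'(i:=t))}"
      by (rule card_as_sum[symmetric]) simp
    also have "{t\<in>{..<d}. ?P (k'(i:=t))} =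
        {t. t < d \<and> (dot n k' m + t * m i) mod d = (dot n k' x + t * x i) mod d}"
      using k' dot_upd[of k' i n] i(1) by auto
    also have "card \<dots> = 1" by (rule count_lin[OF pr mi xi i(2)])
    finally show "(\<Sum>t<d. if ?P (k'(i:=t)) then 1 else 0::nat) = 1" .
  qed
  also have "\<dots> = d ^ (n - 1)" using card_outputs0[OF i(1) d0] by simp
  finally show ?thesis .
qed

lemma cnt_sumF:
  fixes d n i v :: nat and F :: "(nat \<Rightarrow> nat) set"
  assumes pr: "prime d" and fin: "finite F" and i: "i < n" and Fi: "\<forall>m\<in>F. m i < d"
    and Fc: "\<forall>m\<in>F. \<forall>t<d. m(i:=t) \<in> F" and v: "v < d"
  shows "card {m\<in>F. (\<Sum>j<n. m j) mod d = v} = card {m\<in>F. m i = 0}"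
proof -
  have d0: "0 < d" using pr prime_gt_0_nat by blast
  have d1: "1 < d" using pr prime_gt_1_nat by blast
  let ?P = "\<lambda>m. (\<Sum>j<n. m j) mod d = v"
  have "card {m\<in>F. ?P m} = (\<Sum>m\<in>F. if ?P m then 1 else 0::nat)"
    by (rule card_as_sum[OF fin])
  also have "\<dots> = (\<Sum>m'\<in>{m\<in>F. m i = 0}. \<Sum>t<d. if ?P (m'(i:=t)) then 1 else 0::nat)"
    by (rule sum_split_coord[OF fin d0 Fi Fc])
  also have "\<dots> = (\<Sum>m'\<in>{m\<in>F. m i = 0}. 1::nat)"
  proof (rule sum.cong[OF refl])
    fix m' assume m': "m' \<in> {m\<in>F. m i = 0}"
    have "(\<Sum>t<d. if ?P (m'(i:=t)) then 1 else 0::nat) = card {t\<in>{..<d}. ?P (m'(i:=t))}"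
      by (rule card_as_sum[symmetric]) simp
    also have "{t\<in>{..<d}. ?P (m'(i:=t))} =
        {t. t < d \<and> ((\<Sum>j<n. m' j) + t * 1) mod d = (v + t * 0) mod d}"
      using m' sum_upd[of m' i n] i v by auto
    also have "card \<dots> = 1" by (rule count_lin[OF pr d1 d0]) simp
    finally show "(\<Sum>t<d. if ?P (m'(i:=t)) then 1 else 0::nat) = 1" .
  qed
  also have "\<dots> = card {m\<in>F. m i = 0}" by simp
  finally show ?thesis .
qed

locale NSsetup =
  fixes n d :: nat and c :: "nat \<Rightarrow> nat" and f :: "(nat\<Rightarrow>nat)\<Rightarrow>nat"
    and p :: "(nat\<Rightarrow>nat)\<Rightarrow>(nat\<Rightarrow>nat)\<Rightarrow>real"
  assumes n2: "n \<ge> 2" and pr: "prime d" and cpos: "\<forall>j<n. c j > 0"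
    and frange: "\<forall>s\<in>inputs c n. f s < d" and nbl: "\<not> bipartite_linear n c d f"
    and cd: "is_cond_distr n c d p" and ns: "non_signalling n c d p"
    and corr: "\<forall>s\<in>inputs c n. \<forall>k<d. correlator n d p s k = (if k = f s then 1 else 0)"
begin

abbreviation Om where "Om \<equiv> outputs d n"
abbreviation Is where "Is \<equiv> inputs c n"
abbreviation D where "D \<equiv> Dk n d p"

lemma d0: "0 < d" using pr prime_gt_0_nat by blast
lemma d1: "1 < d" using pr prime_gt_1_nat by blast

lemma nonneg: "s \<in> Is \<Longrightarrow> m \<in> Om \<Longrightarrow> p m s \<ge> 0"
  using cd by (auto simp: is_cond_distr_def)

lemma sum1: "s \<in> Is \<Longrightarrow> (\<Sum>m\<in>Om. p m s) = 1"
  using cd by (auto simp: is_cond_distr_def)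

lemma support:
  assumes s: "s \<in> Is" and m: "m \<in> Om" and pm: "p m s \<noteq> 0"
  shows "(\<Sum>j<n. m j) mod d = f s"
proof (rule ccontr)
  assume ne: "(\<Sum>j<n. m j) mod d \<noteq> f s"
  let ?k = "(\<Sum>j<n. m j) mod d"
  let ?A = "{x\<in>Om. (\<Sum>j<n. x j) mod d = ?k}"
  have "?k < d" using d0 by simp
  then have "correlator n d p s ?k = 0" using corr s ne by auto
  then have z: "(\<Sum>x\<in>?A. p x s) = 0" by (simp add: correlator_def)
  have fin: "finite ?A" using finite_outputs by simp
  have nn: "\<forall>x\<in>?A. 0 \<le> p x s" using nonneg s by auto
  have "(\<Sum>x\<in>?A. p x s) = 0 \<longleftrightarrow> (\<forall>x\<in>?A. p x s = 0)"
    by (rule sum_nonneg_eq_0_iff[OF fin]) (use nn in auto)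
  then have "\<forall>x\<in>?A. p x s = 0" using z by blast
  then show False using m pm by auto
qed

lemma D_sum: assumes s: "s \<in> Is" shows "(\<Sum>v<d. D K s v) = 1"
proof -
  have "(\<Sum>v<d. D K s v) = (\<Sum>m\<in>Om. \<Sum>v<d. if dot n K m mod d = v mod d then p m s else 0)"
    unfolding Dk_def by (rule sum.swap)
  also have "\<dots> = (\<Sum>m\<in>Om. p m s)"
  proof (rule sum.cong[OF refl])
    fix m
    have "(\<Sum>v<d. if dot n K m mod d = v mod d then p m s else 0)
        = (\<Sum>v<d. if v = dot n K m mod d then p m s else 0)"
      by (rule sum.cong) auto
    also have "\<dots> = p m s" using d0 by (simp add: sum.delta)
    finally show "(\<Sum>v<d. if dot n K m mod d = v mod d then p m s else 0) = p m s" .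
  qed
  also have "\<dots> = 1" using sum1 s by simp
  finally show ?thesis .
qed

lemma const_val: assumes s: "s \<in> Is" and cst: "constf (D K s)" shows "D K s v = 1 / real d"
proof -
  have "(\<Sum>v<d. D K s v) = (\<Sum>v<d. D K s 0)"
    by (rule sum.cong[OF refl]) (use cst in \<open>simp add: constf_def\<close>)
  then have "real d * D K s 0 = 1" using D_sum[OF s] by simp
  then have "D K s 0 = 1 / real d" using d0 by (simp add: field_simps)
  then show ?thesis using cst by (simp add: constf_def)
qed

lemma ns':
  assumes "J \<subseteq> {..<n}" "s \<in> Is" "s' \<in> Is" "\<forall>j\<in>{..<n}-J. s j = s' j" "m0 \<in> Om"
  shows "(\<Sum>m\<in>{m\<in>Om. \<forall>j\<in>{..<n}-J. m j = m0 j}. p m s) = (\<Sum>m\<in>{m\<in>Om. \<forall>j\<in>{..<n}-J. m j = m0 j}. p m s')"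
  using ns assms unfolding non_signalling_def by blast

lemma fiber_eq:
  assumes "x \<in> Om" "m0 \<in> Om"
  shows "zo J x = zo J m0 \<longleftrightarrow> (\<forall>j\<in>{..<n}-J. x j = m0 j)"
proof
  assume "zo J x = zo J m0"
  then show "\<forall>j\<in>{..<n}-J. x j = m0 j" by (auto simp: zo_def fun_eq_iff) (metis)
next
  assume h: "\<forall>j\<in>{..<n}-J. x j = m0 j"
  show "zo J x = zo J m0"
  proof
    fix j show "zo J x j = zo J m0 j"
      using h assms by (cases "j < n") (auto simp: zo_def outputs_def)
  qed
qed

lemma D_indep:
  assumes J: "J \<subseteq> {..<n}" and K0: "\<forall>j\<in>J. K j = 0" and s: "s \<in> Is" and s': "s' \<in> Is"
    and agree: "\<forall>j\<in>{..<n}-J. s j = s' j"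
  shows "D K s v = D K s' v"
proof -
  note rep = Dk_rep[OF K0]
  have inner: "(\<Sum>m\<in>{x\<in>Om. zo J x = y}. p m s) = (\<Sum>m\<in>{x\<in>Om. zo J x = y}. p m s')"
    if y: "y \<in> zo J ` Om" for y
  proof -
    obtain m0 where m0: "m0 \<in> Om" "y = zo J m0" using y by auto
    have fe: "{x\<in>Om. zo J x = y} = {x\<in>Om. \<forall>j\<in>{..<n}-J. x j = m0 j}"
      using fiber_eq[OF _ m0(1)] m0(2) by auto
    show ?thesis unfolding fe by (rule ns'[OF J s s' agree m0(1)])
  qed
  show ?thesis unfolding rep[where t=s] rep[where t=s'] using inner by (intro sum.cong) auto
qed

lemma dot_sh:
  assumes s: "s \<in> Is" and m: "m \<in> Om" and pm: "p m s \<noteq> 0"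
  shows "[dot n (sh d K a) m = dot n K m + (d - a) * f s] (mod d)"
proof -
  have "[dot n (sh d K a) m = (\<Sum>j<n. (K j + (d - a)) * m j)] (mod d)"
    unfolding dot_def sh_def by (intro cong_sum cong_mult) (auto simp: cong_def)
  also have "(\<Sum>j<n. (K j + (d - a)) * m j) = dot n K m + (d - a) * (\<Sum>j<n. m j)"
    by (simp add: dot_def algebra_simps sum.distrib sum_distrib_left)
  also have "[dot n K m + (d - a) * (\<Sum>j<n. m j) = dot n K m + (d - a) * f s] (mod d)"
  proof -
    have "[(\<Sum>j<n. m j) = f s] (mod d)" using support[OF s m pm] frange s by (simp add: cong_def)
    then show ?thesis by (intro cong_add cong_mult) auto
  qed
  finally show ?thesis .
qed

lemma D_shift:
  assumes s: "s \<in> Is"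
  shows "D K s v = D (sh d K a) s (v + (d - a) * f s)"
  unfolding Dk_def
proof (rule sum.cong[OF refl])
  fix m assume m: "m \<in> Om"
  show "(if dot n K m mod d = v mod d then p m s else 0) =
        (if dot n (sh d K a) m mod d = (v + (d - a) * f s) mod d then p m s else 0)"
  proof (cases "p m s = 0")
    case True then show ?thesis by simp
  next
    case False
    have h: "[dot n (sh d K a) m = dot n K m + (d - a) * f s] (mod d)" using dot_sh[OF s m False] .
    have "(dot n (sh d K a) m mod d = (v + (d - a) * f s) mod d) \<longleftrightarrow>
          [dot n K m + (d - a) * f s = v + (d - a) * f s] (mod d)"
      using h unfolding cong_def by simp
    also have "\<dots> \<longleftrightarrow> dot n K m mod d = v mod d"
      by (simp only: cong_add_rcancel_nat) (simp add: cong_def)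
    finally show ?thesis by simp
  qed
qed

lemma Dper: "\<forall>v. D K s (v mod d) = D K s v" by (simp add: Dk_mod)


lemma sh_zero: "K j < d \<Longrightarrow> sh d K (K j) j = 0"
  by (simp add: sh_def)

lemma upd_inputs: "s \<in> Is \<Longrightarrow> j < n \<Longrightarrow> t < c j \<Longrightarrow> s(j:=t) \<in> Is"
  by (auto simp: inputs_def)

lemma const_coord:
  assumes k: "k \<in> Om" and s: "s \<in> Is" and j: "j < n" and t: "t < c j"
  shows "constf (D k s) \<longleftrightarrow> constf (D k (s(j:=t)))"
proof -
  let ?Kj = "sh d k (k j)"
  let ?s' = "s(j:=t)"
  have s': "?s' \<in> Is" using upd_inputs[OF s j t] .
  have kj: "k j < d" using k j by (auto simp: outputs_def)
  have z: "\<forall>l\<in>{j}. ?Kj l = 0" using sh_zero[of k j, OF kj] by simp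
  have ag: "\<forall>l\<in>{..<n}-{j}. s l = ?s' l" by simp
  have jn: "{j} \<subseteq> {..<n}" using j by simp
  have ind: "D ?Kj s = D ?Kj ?s'" by (rule ext) (rule D_indep[OF jn z s s' ag])
  have e1: "D k s = (\<lambda>v. D ?Kj s (v + (d - k j) * f s))" by (rule ext) (rule D_shift[OF s])
  have e2: "D k ?s' = (\<lambda>v. D ?Kj ?s' (v + (d - k j) * f ?s'))" by (rule ext) (rule D_shift[OF s'])
  have "constf (D k s) \<longleftrightarrow> constf (D ?Kj s)" unfolding e1 by (rule const_shift[OF Dper d0])
  also have "\<dots> \<longleftrightarrow> constf (D ?Kj ?s')" by (simp only: ind)
  also have "\<dots> \<longleftrightarrow> constf (D k ?s')" unfolding e2 by (rule const_shift[OF Dper d0, symmetric])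
  finally show ?thesis .
qed

lemma const_all:
  assumes k: "k \<in> Om" and s: "s \<in> Is" and s': "s' \<in> Is"
  shows "constf (D k s) \<longleftrightarrow> constf (D k s')"
proof -
  define h where "h r = (\<lambda>j. if j < r then s' j else s j)" for r
  have "r \<le> n \<Longrightarrow> h r \<in> Is \<and> (constf (D k s) \<longleftrightarrow> constf (D k (h r)))" for r
  proof (induction r)
    case 0
    have "h 0 = s" by (simp add: h_def)
    then show ?case using s by simp
  next
    case (Suc r)
    then have IH: "h r \<in> Is" "constf (D k s) \<longleftrightarrow> constf (D k (h r))" by auto
    have rn: "r < n" using Suc.prems by simp
    have eq: "h (Suc r) = (h r)(r := s' r)" by (auto simp: h_def fun_eq_iff)
    have t: "s' r < c r" using s' rn by (auto simp: inputs_def)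
    have a1: "h (Suc r) \<in> Is" unfolding eq by (rule upd_inputs[OF IH(1) rn t])
    have a2: "constf (D k s) \<longleftrightarrow> constf (D k (h (Suc r)))"
      unfolding eq using IH(2) const_coord[OF k IH(1) rn t] by (rule trans)
    show ?case using a1 a2 by blast
  qed
  from this[of n] have "constf (D k s) \<longleftrightarrow> constf (D k (h n))" by simp
  moreover have "h n = s'"
  proof
    fix j show "h n j = s' j" using s s' by (auto simp: h_def inputs_def)
  qed
  ultimately show ?thesis by simp
qed

lemma cc_coprime:
  assumes "a < d" "b < d" "a \<noteq> b"
  shows "coprime (b + (d - a)) d"
proof -
  have "\<not> d dvd (b + (d - a))"
  proof
    assume dv: "d dvd (b + (d - a))"
    have "b + (d - a) = d" by (rule small_dvd[OF _ _ dv]) (use assms in auto)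
    then show False using assms by auto
  qed
  then show ?thesis using prime_imp_coprime[OF pr] coprime_commute by blast
qed

lemma mixed:
  assumes k: "k \<in> Om" and i: "i < n" and j: "j < n" and kij: "k i \<noteq> k j"
    and u: "u \<in> Is" and nc: "\<not> constf (D k u)"
  shows "[f u + f (zo {i,j} u) = f (zo {i} u) + f (zo {j} u)] (mod d)"
proof -
  define a where "a = k i"
  define b where "b = k j"
  have ad: "a < d" and bd: "b < d" using k i j by (auto simp: outputs_def a_def b_def)
  have ab: "a \<noteq> b" using kij by (simp add: a_def b_def)
  define Ki where "Ki = sh d k a"
  define Kj where "Kj = sh d k b"
  define cc where "cc = b + (d - a)"
  have cop: "coprime cc d" unfolding cc_def by (rule cc_coprime[OF ad bd ab])
  have E: "D Kj s y = D Ki s (y + cc * f s)" if s: "s \<in> Is" for s y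
  proof -
    have "D Kj s y = D Kj s (y + b * f s + (d - b) * f s)"
    proof -
      have e: "b * f s + (d - b) * f s = d * f s" using bd
        by (simp add: add_mult_distrib[symmetric])
      have "(y + b * f s + (d - b) * f s) mod d = y mod d" unfolding add.assoc e by simp
      then show ?thesis using Dk_mod[of n d p Kj s y] Dk_mod[of n d p Kj s "y + b * f s + (d - b) * f s"] by simp
    qed
    also have "\<dots> = D k s (y + b * f s)" using D_shift[OF s, of k "y + b * f s" b] by (simp add: Kj_def)
    also have "\<dots> = D Ki s (y + b * f s + (d - a) * f s)" using D_shift[OF s, of k _ a] by (simp add: Ki_def)
    also have "y + b * f s + (d - a) * f s = y + cc * f s" by (simp add: cc_def algebra_simps)
    finally show ?thesis .
  qed
  define v where "v = zo {i} u"
  define w where "w = zo {j} u"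
  define x where "x = zo {i,j} u"
  have vI: "v \<in> Is" and wI: "w \<in> Is" and xI: "x \<in> Is"
    using zo_inputs[OF cpos u] by (auto simp: v_def w_def x_def)
  have Ki0: "Ki i = 0" unfolding Ki_def a_def using sh_zero ad a_def by simp
  have Kj0: "Kj j = 0" unfolding Kj_def b_def using sh_zero bd b_def by simp
  have agree_uv: "\<forall>l\<in>{..<n}-{i}. u l = v l" by (auto simp: v_def zo_def)
  have agree_wx: "\<forall>l\<in>{..<n}-{i}. w l = x l" by (auto simp: w_def x_def zo_def)
  have agree_uw: "\<forall>l\<in>{..<n}-{j}. u l = w l" by (auto simp: w_def zo_def)
  have agree_vx: "\<forall>l\<in>{..<n}-{j}. v l = x l" by (auto simp: v_def x_def zo_def)
  have i1: "D Ki u z = D Ki v z" for z by (rule D_indep[of "{i}"]) (use i Ki0 u vI agree_uv in auto)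
  have i2: "D Ki w z = D Ki x z" for z by (rule D_indep[of "{i}"]) (use i Ki0 wI xI agree_wx in auto)
  have i3: "D Kj u z = D Kj w z" for z by (rule D_indep[of "{j}"]) (use j Kj0 u wI agree_uw in auto)
  have i4: "D Kj v z = D Kj x z" for z by (rule D_indep[of "{j}"]) (use j Kj0 vI xI agree_vx in auto)
  define P where "P = D Ki u"
  define Q where "Q = D Ki w"
  have h1: "P (y + cc * f u) = Q (y + cc * f w)" for y
    using E[OF u, of y] E[OF wI, of y] i3[of y] by (simp add: P_def Q_def)
  have h2: "P (y + cc * f v) = Q (y + cc * f x)" for y
    using E[OF vI, of y] E[OF xI, of y] i4[of y] i1 i2 by (simp add: P_def Q_def)
  define \<alpha> where "\<alpha> = cc * (f u + f x)"
  define \<beta> where "\<beta> = cc * (f v + f w)"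
  have h3: "P (y + \<alpha>) = P (y + \<beta>)" for y
  proof -
    have "P (y + \<alpha>) = P ((y + cc * f x) + cc * f u)" by (simp add: \<alpha>_def algebra_simps)
    also have "\<dots> = Q ((y + cc * f x) + cc * f w)" by (rule h1)
    also have "\<dots> = Q ((y + cc * f w) + cc * f x)" by (simp add: algebra_simps)
    also have "\<dots> = P ((y + cc * f w) + cc * f v)" by (rule h2[symmetric])
    also have "\<dots> = P (y + \<beta>)" by (simp add: \<beta>_def algebra_simps)
    finally show ?thesis .
  qed
  define \<tau> where "\<tau> = (d - 1) * \<alpha> + \<beta>"
  have Pper: "\<forall>z. P (z mod d) = P z" by (simp add: P_def Dk_mod)
  have ht: "P (z + \<tau>) = P z" for z
  proof -
    have "P (z + \<tau>) = P ((z + (d - 1) * \<alpha>) + \<beta>)" by (simp add: \<tau>_def algebra_simps)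
    also have "\<dots> = P ((z + (d - 1) * \<alpha>) + \<alpha>)" by (rule h3[symmetric])
    also have "(z + (d - 1) * \<alpha>) + \<alpha> = z + d * \<alpha>" using dm1[OF d0, of \<alpha>] by simp
    also have "P (z + d * \<alpha>) = P z" using Pper[rule_format, of "z + d * \<alpha>"] Pper[rule_format, of z] by simp
    finally show ?thesis .
  qed
  have dvt: "d dvd \<tau>"
  proof (rule ccontr)
    assume "\<not> d dvd \<tau>"
    then have "constf P" using periodic_const[OF Pper _ pr] ht by blast
    then have "constf (\<lambda>z. P (z + (d - a) * f u))" using const_shift[OF Pper d0] by blast
    moreover have "(\<lambda>z. P (z + (d - a) * f u)) = D k u"
      using D_shift[OF u, of k _ a] by (auto simp: P_def Ki_def fun_eq_iff)
    ultimately show False using nc by simp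
  qed
  have "[\<alpha> = \<alpha> + \<tau>] (mod d)" using dvt
    by (metis cong_add_lcancel_0_nat cong_0_iff cong_sym)
  also have "\<alpha> + \<tau> = d * \<alpha> + \<beta>" using dm1[OF d0, of \<alpha>] by (simp add: \<tau>_def)
  also have "[d * \<alpha> + \<beta> = \<beta>] (mod d)" by (simp add: cong_def)
  finally have "[cc * (f u + f x) = cc * (f v + f w)] (mod d)" by (simp add: \<alpha>_def \<beta>_def)
  then have "[f u + f x = f v + f w] (mod d)" using cong_mult_lcancel_nat[OF cop] by blast
  then show ?thesis by (simp add: v_def w_def x_def)
qed


definition Rr :: "nat set \<Rightarrow> nat set \<Rightarrow> bool" where
  "Rr A B \<longleftrightarrow> (\<forall>u\<in>Is. [f u + f (zo (A \<union> B) u) = f (zo A u) + f (zo B u)] (mod d))"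

lemma Rr_union:
  assumes h1: "Rr A B1" and h2: "Rr A B2"
  shows "Rr A (B1 \<union> B2)"
  unfolding Rr_def
proof
  fix u assume u: "u \<in> Is"
  have u1: "zo B1 u \<in> Is" by (rule zo_inputs[OF cpos u])
  have c1: "[f u + f (zo (A \<union> B1) u) = f (zo A u) + f (zo B1 u)] (mod d)"
    using h1 u unfolding Rr_def by blast
  have c2': "[f (zo B1 u) + f (zo (A \<union> B2) (zo B1 u)) = f (zo A (zo B1 u)) + f (zo B2 (zo B1 u))] (mod d)"
    using h2 u1 unfolding Rr_def by blast
  have e1: "zo (A \<union> B2) (zo B1 u) = zo (A \<union> (B1 \<union> B2)) u"
    unfolding zo_zo by (rule arg_cong[where f="\<lambda>X. zo X u"]) blast
  have e2: "zo A (zo B1 u) = zo (A \<union> B1) u"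
    unfolding zo_zo by (rule arg_cong[where f="\<lambda>X. zo X u"]) blast
  have e3: "zo B2 (zo B1 u) = zo (B1 \<union> B2) u" by (rule zo_zo)
  have c2: "[f (zo B1 u) + f (zo (A \<union> (B1 \<union> B2)) u) = f (zo (A \<union> B1) u) + f (zo (B1 \<union> B2) u)] (mod d)"
    using c2' unfolding e1 e2 e3 .
  have c3: "[(f u + f (zo (A \<union> B1) u)) + (f (zo B1 u) + f (zo (A \<union> (B1 \<union> B2)) u))
           = (f (zo A u) + f (zo B1 u)) + (f (zo (A \<union> B1) u) + f (zo (B1 \<union> B2) u))] (mod d)"
    by (rule cong_add[OF c1 c2])
  have l: "(f u + f (zo (A \<union> B1) u)) + (f (zo B1 u) + f (zo (A \<union> (B1 \<union> B2)) u))
         = (f u + f (zo (A \<union> (B1 \<union> B2)) u)) + (f (zo (A \<union> B1) u) + f (zo B1 u))" by simp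
  have r: "(f (zo A u) + f (zo B1 u)) + (f (zo (A \<union> B1) u) + f (zo (B1 \<union> B2) u))
         = (f (zo A u) + f (zo (B1 \<union> B2) u)) + (f (zo (A \<union> B1) u) + f (zo B1 u))" by simp
  from c3 have "[(f u + f (zo (A \<union> (B1 \<union> B2)) u)) + (f (zo (A \<union> B1) u) + f (zo B1 u))
           = (f (zo A u) + f (zo (B1 \<union> B2) u)) + (f (zo (A \<union> B1) u) + f (zo B1 u))] (mod d)"
    unfolding l r .
  then show "[f u + f (zo (A \<union> (B1 \<union> B2)) u) = f (zo A u) + f (zo (B1 \<union> B2) u)] (mod d)"
    by (simp only: cong_add_rcancel_nat)
qed

lemma Rr_sym: "Rr A B \<longleftrightarrow> Rr B A"
  unfolding Rr_def by (simp add: Un_commute add.commute)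

lemma Rr_empty: "Rr A {}"
  unfolding Rr_def by (simp add: add.commute)

lemma Rr_fin: "finite B \<Longrightarrow> (\<forall>b\<in>B. Rr A {b}) \<Longrightarrow> Rr A B"
proof (induction B rule: finite_induct)
  case empty show ?case by (rule Rr_empty)
next
  case (insert b B)
  have "Rr A ({b} \<union> B)" using insert by (intro Rr_union) auto
  then show ?case by simp
qed

lemma nonconst_const:
  assumes k: "k \<in> Om" and j0: "j0 < n" and kj0: "k j0 \<noteq> k 0"
  shows "\<forall>s\<in>Is. constf (D k s)"
proof (rule ccontr)
  assume "\<not> (\<forall>s\<in>Is. constf (D k s))"
  then obtain s0 where s0: "s0 \<in> Is" "\<not> constf (D k s0)" by blast
  have nc: "\<not> constf (D k u)" if "u \<in> Is" for u using const_all[OF k that s0(1)] s0(2) by blast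
  define J where "J = {j. j < n \<and> k j = k 0}"
  define Jc where "Jc = {j. j < n \<and> k j \<noteq> k 0}"
  have n0: "0 < n" using n2 by simp
  have single: "Rr {i} {j}" if i: "i \<in> J" and j: "j \<in> Jc" for i j
    unfolding Rr_def
  proof
    fix u assume u: "u \<in> Is"
    have "i < n" "j < n" "k i \<noteq> k j" using i j by (auto simp: J_def Jc_def)
    from mixed[OF k this u nc[OF u]]
    show "[f u + f (zo ({i} \<union> {j}) u) = f (zo {i} u) + f (zo {j} u)] (mod d)"
      by (simp add: insert_commute)
  qed
  have finJ: "finite J" and finJc: "finite Jc" by (auto simp: J_def Jc_def)
  have RiJc: "Rr {i} Jc" if "i \<in> J" for i using single[OF that] by (intro Rr_fin[OF finJc]) auto
  have "Rr Jc J" using RiJc Rr_sym by (intro Rr_fin[OF finJ]) auto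
  then have RJ: "Rr J Jc" using Rr_sym by blast
  define z0 where "z0 = (\<lambda>_::nat. 0::nat)"
  have z0I: "z0 \<in> Is" using cpos by (auto simp: z0_def inputs_def)
  have fz0: "f z0 < d" using frange z0I by blast
  define f1 where "f1 s = f (zo Jc s)" for s
  define f2 where "f2 s = (f (zo J s) + (d - f z0)) mod d" for s
  have "bipartite_linear n c d f"
    unfolding bipartite_linear_def
  proof (rule exI[of _ J], rule exI[of _ f1], rule exI[of _ f2], intro conjI)
    show "J \<noteq> {}" using n0 by (auto simp: J_def)
    show "J \<subset> {..<n}" using j0 kj0 by (auto simp: J_def)
    show "\<forall>s\<in>Is. f1 s < d \<and> f2 s < d"
    proof
      fix s assume s: "s \<in> Is"
      show "f1 s < d \<and> f2 s < d" using frange zo_inputs[OF cpos s] d0 by (simp add: f1_def f2_def)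
    qed
    show "\<forall>s\<in>Is. \<forall>s'\<in>Is. (\<forall>j\<in>J. s j = s' j) \<longrightarrow> f1 s = f1 s'"
    proof (intro ballI impI)
      fix s s' assume s: "s \<in> Is" and s': "s' \<in> Is" and ag: "\<forall>j\<in>J. s j = s' j"
      have "zo Jc s = zo Jc s'"
      proof
        fix j show "zo Jc s j = zo Jc s' j"
          using s s' ag by (cases "j < n") (auto simp: zo_def J_def Jc_def inputs_def)
      qed
      then show "f1 s = f1 s'" by (simp add: f1_def)
    qed
    show "\<forall>s\<in>Is. \<forall>s'\<in>Is. (\<forall>j\<in>{..<n}-J. s j = s' j) \<longrightarrow> f2 s = f2 s'"
    proof (intro ballI impI)
      fix s s' assume s: "s \<in> Is" and s': "s' \<in> Is" and ag: "\<forall>j\<in>{..<n}-J. s j = s' j"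
      have "zo J s = zo J s'"
      proof
        fix j show "zo J s j = zo J s' j"
          using s s' ag by (cases "j < n") (auto simp: zo_def J_def inputs_def)
      qed
      then show "f2 s = f2 s'" by (simp add: f2_def)
    qed
    show "\<forall>s\<in>Is. f s = (f1 s + f2 s) mod d"
    proof
      fix s assume s: "s \<in> Is"
      have zall: "zo (J \<union> Jc) s = z0"
      proof
        fix j show "zo (J \<union> Jc) s j = z0 j"
          using s by (cases "j < n") (auto simp: zo_def J_def Jc_def inputs_def z0_def)
      qed
      have c: "[f s + f z0 = f (zo J s) + f (zo Jc s)] (mod d)"
        using RJ s zall unfolding Rr_def by metis
      have fs: "f s < d" using frange s by blast
      have "[f (zo J s) + f (zo Jc s) + (d - f z0) = f s + f z0 + (d - f z0)] (mod d)"
        by (rule cong_add[OF cong_sym[OF c] cong_refl])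
      also have "f s + f z0 + (d - f z0) = f s + d" using fz0 by simp
      finally have c2: "(f (zo J s) + f (zo Jc s) + (d - f z0)) mod d = f s"
        using fs by (simp add: cong_def)
      have "(f1 s + f2 s) mod d = (f (zo Jc s) + (f (zo J s) + (d - f z0))) mod d"
        by (simp add: f1_def f2_def mod_add_right_eq)
      also have "\<dots> = (f (zo J s) + f (zo Jc s) + (d - f z0)) mod d" by (simp add: ac_simps)
      finally show "f s = (f1 s + f2 s) mod d" using c2 by simp
    qed
  qed
  then show False using nbl by blast
qed


lemma const_k_val:
  assumes s: "s \<in> Is" and x: "x \<in> Om" and xs: "(\<Sum>j<n. x j) mod d = f s"
    and k: "k \<in> Om" and kc: "\<forall>j<n. k j = k 0"
  shows "D k s (dot n k x) = 1"
proof -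
  have dk: "dot n k m = k 0 * (\<Sum>j<n. m j)" for m
    unfolding dot_def sum_distrib_left
  proof (rule sum.cong[OF refl])
    fix j assume "j \<in> {..<n}"
    then have "k j = k 0" using kc by blast
    then show "k j * m j = k 0 * m j" by simp
  qed
  have "D k s (dot n k x) = (\<Sum>m\<in>Om. p m s)"
    unfolding Dk_def
  proof (rule sum.cong[OF refl])
    fix m assume m: "m \<in> Om"
    show "(if dot n k m mod d = dot n k x mod d then p m s else 0) = p m s"
    proof (cases "p m s = 0")
      case True then show ?thesis by simp
    next
      case False
      have ms: "(\<Sum>j<n. m j) mod d = f s" by (rule support[OF s m False])
      have "dot n k m mod d = (k 0 * ((\<Sum>j<n. m j) mod d)) mod d" by (simp add: dk mod_mult_right_eq)
      also have "\<dots> = (k 0 * ((\<Sum>j<n. x j) mod d)) mod d" using ms xs by simp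
      also have "\<dots> = dot n k x mod d" by (simp add: dk mod_mult_right_eq)
      finally show ?thesis by simp
    qed
  qed
  also have "\<dots> = 1" using sum1[OF s] .
  finally show ?thesis .
qed

lemma main_val:
  assumes s: "s \<in> Is" and x: "x \<in> Om" and xs: "(\<Sum>j<n. x j) mod d = f s"
  shows "p x s = 1 / real d ^ (n - 1)"
proof -
  define S where "S = (\<Sum>k\<in>Om. D k s (dot n k x))"
  define q where "q = real d ^ (n - 1)"
  have dn: "real d ^ n = real d * q"
    using n2 by (simp add: q_def power_eq_if[of "real d" n])
  have q0: "q > 0" using d0 by (simp add: q_def)
  have fin: "finite Om" by (rule finite_outputs)
  have "S = (\<Sum>k\<in>Om. \<Sum>m\<in>Om. if dot n k m mod d = dot n k x mod d then p m s else 0)"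
    unfolding S_def Dk_def by simp
  also have "\<dots> = (\<Sum>m\<in>Om. \<Sum>k\<in>Om. if dot n k m mod d = dot n k x mod d then p m s else 0)"
    by (rule sum.swap)
  also have "\<dots> = (\<Sum>m\<in>Om. real (card {k\<in>Om. dot n k m mod d = dot n k x mod d}) * p m s)"
    by (rule sum.cong[OF refl]) (rule sum_if_const[OF fin])
  also have "\<dots> = real (card {k\<in>Om. dot n k x mod d = dot n k x mod d}) * p x s
      + (\<Sum>m\<in>Om - {x}. real (card {k\<in>Om. dot n k m mod d = dot n k x mod d}) * p m s)"
    by (rule sum.remove[OF fin x])
  also have "(\<Sum>m\<in>Om - {x}. real (card {k\<in>Om. dot n k m mod d = dot n k x mod d}) * p m s)
      = (\<Sum>m\<in>Om - {x}. q * p m s)"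
    by (rule sum.cong[OF refl]) (use count_neq[OF pr _ x] in \<open>auto simp: q_def\<close>)
  also have "(\<Sum>m\<in>Om - {x}. q * p m s) = q * (1 - p x s)"
    using sum.remove[OF fin x, of "\<lambda>m. p m s"] sum1[OF s]
    by (simp add: sum_distrib_left[symmetric])
  also have "real (card {k\<in>Om. dot n k x mod d = dot n k x mod d}) = real d * q"
    using card_outputs[OF d0, of n] dn by simp
  finally have S1: "S = real d * q * p x s + q * (1 - p x s)" .
  define C where "C = {k\<in>Om. \<forall>j<n. k j = k 0}"
  have CO: "C \<subseteq> Om" unfolding C_def by blast
  have finC: "finite C" using fin CO finite_subset by blast
  have Cimg: "C = (\<lambda>t. \<lambda>j. if j < n then t else 0) ` {..<d}"
  proof (rule set_eqI, rule iffI)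
    fix k assume k: "k \<in> C"
    have kO: "k \<in> Om" and kc: "\<forall>j<n. k j = k 0" using k unfolding C_def by blast+
    have "k = (\<lambda>j. if j < n then k 0 else 0)"
    proof
      fix j show "k j = (if j < n then k 0 else 0)"
      proof (cases "j < n")
        case True
        then have "k j = k 0" using kc by blast
        then show ?thesis using True by simp
      next
        case False then show ?thesis using kO by (simp add: outputs_def)
      qed
    qed
    moreover have "k 0 < d" using kO n2 by (auto simp: outputs_def)
    ultimately show "k \<in> (\<lambda>t. \<lambda>j. if j < n then t else 0) ` {..<d}" by blast
  next
    fix k assume "k \<in> (\<lambda>t. \<lambda>j. if j < n then t else 0) ` {..<d}"
    then show "k \<in> C" using n2 by (auto simp: C_def outputs_def)
  qed
  have injc: "inj_on (\<lambda>t. \<lambda>j. if j < n then t else (0::nat)) {..<d}"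
  proof (rule inj_onI)
    fix a b assume "(\<lambda>j. if j < n then a else (0::nat)) = (\<lambda>j. if j < n then b else 0)"
    from fun_cong[OF this, of 0] show "a = b" using n2 by simp
  qed
  have cardC: "card C = d" unfolding Cimg using card_image[OF injc] by simp
  have cardOC: "real (card (Om - C)) = real d * q - real d"
  proof -
    have "card (Om - C) = card Om - card C" by (rule card_Diff_subset[OF finC CO])
    moreover have "card C \<le> card Om" by (rule card_mono[OF fin CO])
    ultimately have "real (card (Om - C)) = real (card Om) - real (card C)" by simp
    then show ?thesis using cardC card_outputs[OF d0, of n] dn by simp
  qed
  have "S = (\<Sum>k\<in>C. D k s (dot n k x)) + (\<Sum>k\<in>Om - C. D k s (dot n k x))"
    unfolding S_def using sum.subset_diff[OF CO fin, of "\<lambda>k. D k s (dot n k x)"] by (simp add: add.commute)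
  also have "(\<Sum>k\<in>C. D k s (dot n k x)) = (\<Sum>k\<in>C. 1)"
    by (rule sum.cong[OF refl]) (rule const_k_val[OF s x xs], unfold C_def, blast+)
  also have "(\<Sum>k\<in>Om - C. D k s (dot n k x)) = (\<Sum>k\<in>Om - C. 1 / real d)"
  proof (rule sum.cong[OF refl])
    fix k assume k: "k \<in> Om - C"
    then obtain j where j: "j < n" "k j \<noteq> k 0" by (auto simp: C_def)
    have "constf (D k s)" using nonconst_const[of k j] k j s by auto
    then show "D k s (dot n k x) = 1 / real d" by (rule const_val[OF s])
  qed
  finally have S2: "S = real d + (real d * q - real d) / real d"
    using cardC cardOC by simp
  have "(real d * q - real d) / real d = q - 1" using d0 by (simp add: field_simps)
  then have S3: "S = real d + q - 1" using S2 by simp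
  have "(p x s * q - 1) * (real d - 1) = real d * q * p x s + q * (1 - p x s) - (real d + q - 1)"
    by (simp add: algebra_simps)
  also have "\<dots> = 0" using S1 S3 by simp
  finally have "p x s * q = 1" using d1 by simp
  then have "p x s = 1 / q" using q0 by (simp add: field_simps)
  then show ?thesis by (simp add: q_def)
qed

end


lemma p0_props:
  fixes n d :: nat and c :: "nat \<Rightarrow> nat" and f :: "(nat\<Rightarrow>nat)\<Rightarrow>nat"
  assumes n2: "n \<ge> 2" and pr: "prime d" and frange: "\<forall>s\<in>inputs c n. f s < d"
  shows "is_cond_distr n c d (\<lambda>m s. if (\<Sum>j<n. m j) mod d = f s then 1 / real d ^ (n - 1) else 0) \<and>
         non_signalling n c d (\<lambda>m s. if (\<Sum>j<n. m j) mod d = f s then 1 / real d ^ (n - 1) else 0) \<and>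
         (\<forall>s\<in>inputs c n. \<forall>k<d. correlator n d (\<lambda>m s. if (\<Sum>j<n. m j) mod d = f s then 1 / real d ^ (n - 1) else 0) s k = (if k = f s then 1 else 0))"
proof -
  define p0 where "p0 = (\<lambda>m s. if (\<Sum>j<n. m j) mod d = f s then 1 / real d ^ (n - 1) else (0::real))"
  have d0: "0 < d" using pr prime_gt_0_nat by blast
  have n0: "0 < n" using n2 by simp
  define q where "q = real d ^ (n - 1)"
  have q0: "q > 0" using d0 by (simp add: q_def)
  have fin: "finite (outputs d n)" by (rule finite_outputs)
  have cnt: "card {m\<in>outputs d n. (\<Sum>j<n. m j) mod d = v} = d ^ (n - 1)" if v: "v < d" for v
  proof -
    have "card {m\<in>outputs d n. (\<Sum>j<n. m j) mod d = v} = card {m\<in>outputs d n. m 0 = 0}"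
      by (rule cnt_sumF[OF pr fin n0 _ _ v]) (use n0 in \<open>auto simp: outputs_def\<close>)
    also have "\<dots> = d ^ (n - 1)" by (rule card_outputs0[OF n0 d0])
    finally show ?thesis .
  qed
  have A: "is_cond_distr n c d p0"
    unfolding is_cond_distr_def
  proof (rule ballI, rule conjI)
    fix s assume s: "s \<in> inputs c n"
    show "\<forall>m\<in>outputs d n. 0 \<le> p0 m s" by (simp add: p0_def)
    have "(\<Sum>m\<in>outputs d n. p0 m s) = real (card {m\<in>outputs d n. (\<Sum>j<n. m j) mod d = f s}) * (1 / q)"
      unfolding p0_def q_def by (rule sum_if_const[OF fin])
    also have "\<dots> = 1" using cnt[of "f s"] frange s q0 d0 by (simp add: q_def)
    finally show "(\<Sum>m\<in>outputs d n. p0 m s) = 1" .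
  qed
  have C: "\<forall>s\<in>inputs c n. \<forall>k<d. correlator n d p0 s k = (if k = f s then 1 else 0)"
  proof (intro ballI allI impI)
    fix s k assume s: "s \<in> inputs c n" and k: "k < d"
    let ?A = "{m\<in>outputs d n. (\<Sum>j<n. m j) mod d = k}"
    have "correlator n d p0 s k = (\<Sum>m\<in>?A. if k = f s then 1 / q else 0)"
      unfolding correlator_def by (rule sum.cong[OF refl]) (auto simp: p0_def q_def)
    also have "\<dots> = (if k = f s then 1 else 0)"
      using cnt[OF k] q0 d0 by (simp add: q_def)
    finally show "correlator n d p0 s k = (if k = f s then 1 else 0)" .
  qed
  have B: "non_signalling n c d p0"
    unfolding non_signalling_def
  proof (intro allI impI ballI)
    fix J s s' m0
    assume J: "J \<subseteq> {..<n}" and s: "s \<in> inputs c n" and s': "s' \<in> inputs c n"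
      and ag: "\<forall>j\<in>{..<n} - J. s j = s' j" and m0: "m0 \<in> outputs d n"
    define F where "F = {m\<in>outputs d n. \<forall>j\<in>{..<n} - J. m j = m0 j}"
    have finF: "finite F" using fin by (simp add: F_def)
    have rep: "(\<Sum>m\<in>F. p0 m t) = real (card {m\<in>F. (\<Sum>j<n. m j) mod d = f t}) * (1 / q)" for t
      unfolding p0_def q_def by (rule sum_if_const[OF finF])
    show "(\<Sum>m\<in>{m\<in>outputs d n. \<forall>j\<in>{..<n} - J. m j = m0 j}. p0 m s) =
          (\<Sum>m\<in>{m\<in>outputs d n. \<forall>j\<in>{..<n} - J. m j = m0 j}. p0 m s')"
    proof (cases "J = {}")
      case True
      have "s = s'"
      proof
        fix j show "s j = s' j" using ag s s' True by (cases "j < n") (auto simp: inputs_def)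
      qed
      then show ?thesis by simp
    next
      case False
      then obtain i where i: "i \<in> J" by blast
      have iN: "i < n" using i J by auto
      have eq: "card {m\<in>F. (\<Sum>j<n. m j) mod d = v} = card {m\<in>F. m i = 0}" if "v < d" for v
        by (rule cnt_sumF[OF pr finF iN _ _ that]) (use i iN in \<open>auto simp: F_def outputs_def\<close>)
      have "(\<Sum>m\<in>F. p0 m s) = (\<Sum>m\<in>F. p0 m s')"
        unfolding rep using eq[of "f s"] eq[of "f s'"] frange s s' d0 by simp
      then show ?thesis by (simp add: F_def)
    qed
  qed
  show ?thesis using A B C unfolding p0_def by blast
qed

theorem theorem2p3p1:
  fixes n d :: nat and c :: "nat \<Rightarrow> nat" and f :: "(nat \<Rightarrow> nat) \<Rightarrow> nat"
  assumes "n \<ge> 2" and "prime d"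
    and "\<forall>j<n. c j > 0"
    and "\<forall>s\<in>inputs c n. f s < d"
    and "\<not> bipartite_linear n c d f"
  shows "(\<forall>p. is_cond_distr n c d p \<and> non_signalling n c d p \<and>
            (\<forall>s\<in>inputs c n. \<forall>k<d. correlator n d p s k = (if k = f s then 1 else 0))
          \<longrightarrow> (\<forall>s\<in>inputs c n. \<forall>m\<in>outputs d n.
                p m s = (if (\<Sum>j<n. m j) mod d = f s then 1 / real d ^ (n - 1) else 0)))
       \<and> (let p0 = (\<lambda>m s. if (\<Sum>j<n. m j) mod d = f s then 1 / real d ^ (n - 1) else 0)
          in is_cond_distr n c d p0 \<and> non_signalling n c d p0 \<and>
             (\<forall>s\<in>inputs c n. \<forall>k<d. correlator n d p0 s k = (if k = f s then 1 else 0)))"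
proof -
  have P1: "\<forall>p. is_cond_distr n c d p \<and> non_signalling n c d p \<and>
            (\<forall>s\<in>inputs c n. \<forall>k<d. correlator n d p s k = (if k = f s then 1 else 0))
          \<longrightarrow> (\<forall>s\<in>inputs c n. \<forall>m\<in>outputs d n.
                p m s = (if (\<Sum>j<n. m j) mod d = f s then 1 / real d ^ (n - 1) else 0))"
  proof (intro allI impI)
    fix p assume H: "is_cond_distr n c d p \<and> non_signalling n c d p \<and>
            (\<forall>s\<in>inputs c n. \<forall>k<d. correlator n d p s k = (if k = f s then 1 else 0))"
    interpret L: NSsetup n d c f p
      by (rule NSsetup.intro) (use assms H in auto)
    show "\<forall>s\<in>inputs c n. \<forall>m\<in>outputs d n.
                p m s = (if (\<Sum>j<n. m j) mod d = f s then 1 / real d ^ (n - 1) else 0)"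
    proof (intro ballI)
      fix s m assume s: "s \<in> inputs c n" and m: "m \<in> outputs d n"
      show "p m s = (if (\<Sum>j<n. m j) mod d = f s then 1 / real d ^ (n - 1) else 0)"
      proof (cases "(\<Sum>j<n. m j) mod d = f s")
        case True then show ?thesis using L.main_val[OF s m True] by simp
      next
        case False then show ?thesis using L.support[OF s m] by auto
      qed
    qed
  qed
  have P2: "let p0 = (\<lambda>m s. if (\<Sum>j<n. m j) mod d = f s then 1 / real d ^ (n - 1) else 0)
          in is_cond_distr n c d p0 \<and> non_signalling n c d p0 \<and>
             (\<forall>s\<in>inputs c n. \<forall>k<d. correlator n d p0 s k = (if k = f s then 1 else 0))"
    unfolding Let_def by (rule p0_props[OF assms(1,2,4)])
  show ?thesis using P1 P2 by (rule conjI)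
qed


end
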